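(* Let $G$ be an ADMG and let $v_1,v_2,v_3$ be distinct vertices of $G$ such that $G$ contains the edges $v_1\to v_2$, $v_2\to v_3$, $v_2\leftrightarrow v_3$ and $v_1\to v_3$. Then the ADMG $G'$ obtained from $G$ by deleting the edge $v_1\to v_3$ is Markov equivalent to $G$.
   Context: An ADMG (acyclic directed mixed graph) has directed edges $v\to w$ forming no directed cycle and bidirected edges $v\leftrightarrow w$ (unordered pairs), $v\neq w$. A path from $a$ to $b$ is a sequence $v_1,e_1,\dots,e_{k-1},v_k$ with $v_1=a\ne b=v_k$ (vertices may repeat), each $e_j$ an edge (directed either way, or bidirected) between $v_j,v_{j+1}$; an internal $v_j$ is a collider if both $e_{j-1},e_j$ have an arrowhead at $v_j$ (directed into $v_j$ or bidirected). $x$ is a descendant of $v$ if $x=v$ or there is a directed path from $v$ to $x$. The path is active given $Z\subseteq V\setminus\{a,b\}$ if every internal non-collider is not in $Z$ and every collider is in $Z$ or has a descendant in $Z$. $a,b$ are d-connected given $Z$ if an active path exists, otherwise d-separated. Two graphs on the same vertex set are Markov equivalent if they have the same d-separation statements for all $a,b,Z$. *)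

theory Defs
  imports Main
begin

text \<open>An ADMG on a finite vertex set: directed edges dir (pairs (v,w) meaning v to w),
  bidirected edges bi (a symmetric relation, (v,w) and (w,v) both present).\<close>

record 'a admg =
  verts :: "'a set"
  dir :: "'a rel"
  bi :: "'a rel"

definition is_admg :: "'a admg \<Rightarrow> bool" where
  "is_admg G \<longleftrightarrow> finite (verts G)
     \<and> dir G \<subseteq> verts G \<times> verts G \<and> bi G \<subseteq> verts G \<times> verts G
     \<and> (\<forall>v. (v, v) \<notin> (dir G)\<^sup>+)
     \<and> sym (bi G) \<and> (\<forall>v. (v, v) \<notin> bi G)"

text \<open>Kind of the edge traversed from v_j to v_(j+1) along a path.\<close>
datatype ekind = Fwd | Bwd | Bidir

fun edge_ok :: "'a admg \<Rightarrow> 'a \<Rightarrow> 'a \<Rightarrow> ekind \<Rightarrow> bool" where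
  "edge_ok G v w Fwd = ((v, w) \<in> dir G)"
| "edge_ok G v w Bwd = ((w, v) \<in> dir G)"
| "edge_ok G v w Bidir = ((v, w) \<in> bi G)"

fun head_at_end :: "ekind \<Rightarrow> bool" where
  "head_at_end Fwd = True" | "head_at_end Bwd = False" | "head_at_end Bidir = True"

fun head_at_start :: "ekind \<Rightarrow> bool" where
  "head_at_start Fwd = False" | "head_at_start Bwd = True" | "head_at_start Bidir = True"

text \<open>A path: vertex list vs = [v_1..v_k] and edge list es = [e_1..e_(k-1)]; vertices may repeat.\<close>
definition is_path :: "'a admg \<Rightarrow> 'a \<Rightarrow> 'a \<Rightarrow> 'a list \<Rightarrow> ekind list \<Rightarrow> bool" where
  "is_path G a b vs es \<longleftrightarrow> length vs = length es + 1 \<and> vs \<noteq> [] \<and>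
     hd vs = a \<and> last vs = b \<and> a \<noteq> b \<and> set vs \<subseteq> verts G \<and>
     (\<forall>j < length es. edge_ok G (vs ! j) (vs ! Suc j) (es ! j))"

definition is_collider :: "ekind list \<Rightarrow> nat \<Rightarrow> bool" where
  "is_collider es j \<longleftrightarrow> head_at_end (es ! (j - 1)) \<and> head_at_start (es ! j)"

definition descendant :: "'a admg \<Rightarrow> 'a \<Rightarrow> 'a \<Rightarrow> bool" where
  "descendant G v x \<longleftrightarrow> (v, x) \<in> (dir G)\<^sup>*"

definition active :: "'a admg \<Rightarrow> 'a set \<Rightarrow> 'a list \<Rightarrow> ekind list \<Rightarrow> bool" where
  "active G Z vs es \<longleftrightarrow> (\<forall>j. 0 < j \<and> j < length es \<longrightarrow>
      (is_collider es j \<longrightarrow> (\<exists>x\<in>Z. descendant G (vs ! j) x)) \<and>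
      (\<not> is_collider es j \<longrightarrow> vs ! j \<notin> Z))"

definition d_connected :: "'a admg \<Rightarrow> 'a \<Rightarrow> 'a \<Rightarrow> 'a set \<Rightarrow> bool" where
  "d_connected G a b Z \<longleftrightarrow> (\<exists>vs es. is_path G a b vs es \<and> active G Z vs es)"

definition d_separated :: "'a admg \<Rightarrow> 'a \<Rightarrow> 'a \<Rightarrow> 'a set \<Rightarrow> bool" where
  "d_separated G a b Z \<longleftrightarrow> \<not> d_connected G a b Z"

definition markov_equivalent :: "'a admg \<Rightarrow> 'a admg \<Rightarrow> bool" where
  "markov_equivalent G H \<longleftrightarrow> verts G = verts H \<and>
     (\<forall>a\<in>verts G. \<forall>b\<in>verts G. \<forall>Z. a \<noteq> b \<and> Z \<subseteq> verts G - {a, b} \<longrightarrow>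
        (d_separated G a b Z \<longleftrightarrow> d_separated H a b Z))"

end

theory Submission
  imports Defs
begin

lemma nth_ins_v:
  assumes "Suc j < length vs" "i < Suc (length vs)"
  shows "(take (Suc j) vs @ x # drop (Suc j) vs) ! i =
    (if i \<le> j then vs!i else if i = Suc j then x else vs!(i - 1))"
  using assms by (auto simp: nth_append min_def nth_Cons' numeral_2_eq_2 Suc_diff_Suc)

lemma nth_ins_e:
  assumes "j < length es" "i < Suc (length es)"
  shows "(take j es @ k1 # k2 # drop (Suc j) es) ! i =
    (if i < j then es!i else if i = j then k1 else if i = Suc j then k2 else es!(i - 1))"
  using assms by (auto simp: nth_append min_def nth_Cons' numeral_2_eq_2 Suc_diff_Suc)

lemma insert_step:
  assumes P: "is_path G a b vs es" and A: "active G Z vs es" and j: "j < length es"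
    and e1: "edge_ok G (vs!j) x k1" and e2: "edge_ok G x (vs!Suc j) k2"
    and hs: "head_at_start k1 = head_at_start (es!j)" and he: "head_at_end k2 = head_at_end (es!j)"
    and col: "(head_at_end k1 \<and> head_at_start k2) \<longleftrightarrow> x \<in> Z"
    and xv: "x \<in> verts G"
  shows "is_path G a b (take (Suc j) vs @ x # drop (Suc j) vs) (take j es @ k1 # k2 # drop (Suc j) es)
       \<and> active G Z (take (Suc j) vs @ x # drop (Suc j) vs) (take j es @ k1 # k2 # drop (Suc j) es)"
proof -
  define vs' where "vs' = take (Suc j) vs @ x # drop (Suc j) vs"
  define es' where "es' = take j es @ k1 # k2 # drop (Suc j) es"
  have lv: "length vs = length es + 1" and ne: "vs \<noteq> []" and hd: "hd vs = a" and la: "last vs = b"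
    and ab: "a \<noteq> b" and sv: "set vs \<subseteq> verts G"
    and ed: "\<And>i. i < length es \<Longrightarrow> edge_ok G (vs ! i) (vs ! Suc i) (es ! i)"
    using P unfolding is_path_def by auto
  have lv': "length vs' = length es + 2" unfolding vs'_def using lv j by auto
  have le': "length es' = length es + 1" unfolding es'_def using j by auto
  have nv: "\<And>i. i < length es + 2 \<Longrightarrow> vs' ! i = (if i \<le> j then vs!i else if i = Suc j then x else vs!(i - 1))"
    unfolding vs'_def using nth_ins_v[of j vs] lv j by auto
  have nE: "\<And>i. i < length es + 1 \<Longrightarrow> es' ! i = (if i < j then es!i else if i = j then k1 else if i = Suc j then k2 else es!(i - 1))"
    unfolding es'_def using nth_ins_e[of j es] j by auto
  have "vs' \<noteq> []" using lv' by auto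
  have "hd vs' = a" using nv[of 0] hd ne lv' \<open>vs' \<noteq> []\<close> by (simp add: hd_conv_nth)
  moreover have "last vs' = b"
  proof -
    have "last vs' = vs' ! (length es + 1)" using lv' \<open>vs' \<noteq> []\<close> by (simp add: last_conv_nth)
    also have "\<dots> = vs ! length es" using nv[of "length es + 1"] j by auto
    also have "\<dots> = b" using la ne lv by (simp add: last_conv_nth)
    finally show ?thesis .
  qed
  moreover have "set vs' \<subseteq> verts G" unfolding vs'_def using sv xv
    by (auto dest: in_set_takeD in_set_dropD)
  moreover have "\<forall>i < length es'. edge_ok G (vs' ! i) (vs' ! Suc i) (es' ! i)"
  proof (intro allI impI)
    fix i assume i: "i < length es'"
    consider "i < j" | "i = j" | "i = Suc j" | "i > Suc j" by linarith
    then show "edge_ok G (vs' ! i) (vs' ! Suc i) (es' ! i)"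
    proof cases
      case 1 then show ?thesis using nv[of i] nv[of "Suc i"] nE[of i] ed[of i] i le' j by auto
    next
      case 2 then show ?thesis using nv[of i] nv[of "Suc i"] nE[of i] e1 i le' j by auto
    next
      case 3 then show ?thesis using nv[of i] nv[of "Suc i"] nE[of i] e2 i le' j by auto
    next
      case 4 then show ?thesis using nv[of i] nv[of "Suc i"] nE[of i] ed[of "i - 1"] i le' j by auto
    qed
  qed
  ultimately have "is_path G a b vs' es'" unfolding is_path_def using lv' le' ab \<open>vs' \<noteq> []\<close> by auto
  moreover have "active G Z vs' es'"
    unfolding active_def
  proof (intro allI impI)
    fix i assume i: "0 < i \<and> i < length es'"
    have Ai: "\<And>i. 0 < i \<Longrightarrow> i < length es \<Longrightarrow> (is_collider es i \<longrightarrow> (\<exists>x\<in>Z. descendant G (vs ! i) x)) \<and>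
      (\<not> is_collider es i \<longrightarrow> vs ! i \<notin> Z)" using A unfolding active_def by blast
    consider "i < j" | "i = j" | "i = Suc j" | "i = Suc (Suc j)" | "i > Suc (Suc j)" by linarith
    then show "(is_collider es' i \<longrightarrow> (\<exists>x\<in>Z. descendant G (vs' ! i) x)) \<and>
      (\<not> is_collider es' i \<longrightarrow> vs' ! i \<notin> Z)"
    proof cases
      case 1
      have "es' ! (i - 1) = es ! (i - 1)" proof -
        have "i - 1 < length es + 1" "i - 1 < j" using 1 i le' by auto
        then show ?thesis using nE[of "i - 1"] by simp
      qed
      moreover have "es' ! i = es ! i" using nE[of i] 1 i le' by simp
      ultimately have "is_collider es' i = is_collider es i" unfolding is_collider_def by simp
      then show ?thesis using Ai[of i] nv[of i] 1 i le' j by auto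
    next
      case 2
      have "is_collider es' i = is_collider es i" unfolding is_collider_def
        using nE[of i] nE[of "i - 1"] 2 i le' hs by auto
      then show ?thesis using Ai[of i] nv[of i] 2 i le' j by auto
    next
      case 3
      have "is_collider es' i = (x \<in> Z)" unfolding is_collider_def
        using nE[of i] nE[of "i - 1"] 3 i le' col by auto
      moreover have "descendant G x x" unfolding descendant_def by simp
      ultimately show ?thesis using nv[of i] 3 i le' j by auto
    next
      case 4
      have "is_collider es' i = is_collider es (Suc j)" unfolding is_collider_def
        using nE[of i] nE[of "i - 1"] 4 i le' he by auto
      then show ?thesis using Ai[of "Suc j"] nv[of i] 4 i le' j by auto
    next
      case 5
      have "is_collider es' i = is_collider es (i - 1)" unfolding is_collider_def
        using nE[of i] nE[of "i - 1"] 5 i le' by (auto simp: numeral_2_eq_2)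
      then show ?thesis using Ai[of "i - 1"] nv[of i] 5 i le' j by auto
    qed
  qed
  ultimately show ?thesis unfolding vs'_def es'_def by blast
qed


definition bad :: "'a \<Rightarrow> 'a \<Rightarrow> 'a \<Rightarrow> 'a \<Rightarrow> ekind \<Rightarrow> bool" where
  "bad p q u w e \<longleftrightarrow> (e = Fwd \<and> u = p \<and> w = q) \<or> (e = Bwd \<and> u = q \<and> w = p)"

definition badset :: "'a \<Rightarrow> 'a \<Rightarrow> 'a list \<Rightarrow> ekind list \<Rightarrow> nat set" where
  "badset p q vs es = {i. i < length es \<and> bad p q (vs!i) (vs!Suc i) (es!i)}"

lemma badset_shrink:
  assumes lv: "length vs = length es + 1" and j: "j \<in> badset p q vs es"
    and xp: "x \<noteq> p" and xq: "x \<noteq> q"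
  shows "card (badset p q (take (Suc j) vs @ x # drop (Suc j) vs) (take j es @ k1 # k2 # drop (Suc j) es))
     < card (badset p q vs es)"
proof -
  define vs' where "vs' = take (Suc j) vs @ x # drop (Suc j) vs"
  define es' where "es' = take j es @ k1 # k2 # drop (Suc j) es"
  have jl: "j < length es" using j unfolding badset_def by auto
  have le': "length es' = length es + 1" unfolding es'_def using jl by auto
  have nv: "\<And>i. i < length es + 2 \<Longrightarrow> vs' ! i = (if i \<le> j then vs!i else if i = Suc j then x else vs!(i - 1))"
    unfolding vs'_def using nth_ins_v[of j vs] lv jl by auto
  have nE: "\<And>i. i < length es + 1 \<Longrightarrow> es' ! i = (if i < j then es!i else if i = j then k1 else if i = Suc j then k2 else es!(i - 1))"
    unfolding es'_def using nth_ins_e[of j es] jl by auto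
  define f where "f i = (if i < j then i else Suc i)" for i :: nat
  have fin: "finite (badset p q vs es)" unfolding badset_def by auto
  have sub: "badset p q vs' es' \<subseteq> f ` (badset p q vs es - {j})"
  proof
    fix i assume i: "i \<in> badset p q vs' es'"
    then have il: "i < length es + 1" and bi: "bad p q (vs'!i) (vs'!Suc i) (es'!i)"
      unfolding badset_def using le' by auto
    consider "i < j" | "i = j" | "i = Suc j" | "i > Suc j" by linarith
    then show "i \<in> f ` (badset p q vs es - {j})"
    proof cases
      case 1
      then have "i \<in> badset p q vs es" using bi nv[of i] nv[of "Suc i"] nE[of i] il jl
        unfolding badset_def by auto
      then show ?thesis using 1 unfolding f_def by (auto intro!: image_eqI[of _ _ i])
    next
      case 2 then show ?thesis using bi nv[of i] nv[of "Suc i"] nE[of i] il xp xq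
        unfolding bad_def by auto
    next
      case 3 then show ?thesis using bi nv[of i] nv[of "Suc i"] nE[of i] il xp xq
        unfolding bad_def by auto
    next
      case 4
      then have "i - 1 \<in> badset p q vs es" using bi nv[of i] nv[of "Suc i"] nE[of i] il jl
        unfolding badset_def by auto
      then show ?thesis using 4 unfolding f_def by (auto intro!: image_eqI[of _ _ "i - 1"])
    qed
  qed
  have "card (badset p q vs' es') \<le> card (f ` (badset p q vs es - {j}))"
    using sub fin by (intro card_mono) auto
  also have "\<dots> \<le> card (badset p q vs es - {j})" by (rule card_image_le) (use fin in auto)
  also have "\<dots> < card (badset p q vs es)" using fin j by (rule card_Diff1_less)
  finally show ?thesis unfolding vs'_def es'_def .
qed


lemma elim_bad:
  assumes adm: "is_admg G" and v2: "v2 \<in> verts G"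
    and d12: "v1 \<noteq> v2" and d23: "v2 \<noteq> v3"
    and e12: "(v1, v2) \<in> dir G" and e23: "(v2, v3) \<in> dir G" and b23: "(v2, v3) \<in> bi G"
  shows "is_path G a b vs es \<Longrightarrow> active G Z vs es \<Longrightarrow>
    \<exists>vs' es'. is_path G a b vs' es' \<and> active G Z vs' es' \<and> badset v1 v3 vs' es' = {}"
proof (induction "card (badset v1 v3 vs es)" arbitrary: vs es rule: less_induct)
  case less
  show ?case
  proof (cases "badset v1 v3 vs es = {}")
    case True then show ?thesis using less.prems by blast
  next
    case False
    then obtain j where j: "j \<in> badset v1 v3 vs es" by blast
    have jl: "j < length es" and bj: "bad v1 v3 (vs!j) (vs!Suc j) (es!j)"
      using j unfolding badset_def by auto
    have b32: "(v3, v2) \<in> bi G" using adm b23 unfolding is_admg_def sym_def by blast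
    have "\<exists>k1 k2. edge_ok G (vs!j) v2 k1 \<and> edge_ok G v2 (vs!Suc j) k2
      \<and> head_at_start k1 = head_at_start (es!j) \<and> head_at_end k2 = head_at_end (es!j)
      \<and> ((head_at_end k1 \<and> head_at_start k2) \<longleftrightarrow> v2 \<in> Z)"
    proof (cases "es!j = Fwd")
      case True
      then have "vs!j = v1" "vs!Suc j = v3" using bj unfolding bad_def by auto
      then show ?thesis using True e12 e23 b23
        by (intro exI[of _ Fwd] exI[of _ "if v2 \<in> Z then Bidir else Fwd"]) auto
    next
      case False
      then have "es!j = Bwd" "vs!j = v3" "vs!Suc j = v1" using bj unfolding bad_def by auto
      then show ?thesis using e12 e23 b32
        by (intro exI[of _ "if v2 \<in> Z then Bidir else Bwd"] exI[of _ Bwd]) auto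
    qed
    then obtain k1 k2 where k: "edge_ok G (vs!j) v2 k1" "edge_ok G v2 (vs!Suc j) k2"
      "head_at_start k1 = head_at_start (es!j)" "head_at_end k2 = head_at_end (es!j)"
      "(head_at_end k1 \<and> head_at_start k2) \<longleftrightarrow> v2 \<in> Z" by blast
    have new: "is_path G a b (take (Suc j) vs @ v2 # drop (Suc j) vs) (take j es @ k1 # k2 # drop (Suc j) es)
       \<and> active G Z (take (Suc j) vs @ v2 # drop (Suc j) vs) (take j es @ k1 # k2 # drop (Suc j) es)"
      by (rule insert_step[OF less.prems jl k v2])
    have lv: "length vs = length es + 1" using less.prems unfolding is_path_def by auto
    have "card (badset v1 v3 (take (Suc j) vs @ v2 # drop (Suc j) vs) (take j es @ k1 # k2 # drop (Suc j) es))
       < card (badset v1 v3 vs es)"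
      by (rule badset_shrink[OF lv j]) (use d12 d23 in auto)
    then show ?thesis using less.hyps new by blast
  qed
qed

theorem mainTheorem9:
  fixes G :: "'a admg" and v1 v2 v3 :: 'a
  assumes "is_admg G"
    and "v1 \<in> verts G" and "v2 \<in> verts G" and "v3 \<in> verts G"
    and "v1 \<noteq> v2" and "v2 \<noteq> v3" and "v1 \<noteq> v3"
    and "(v1, v2) \<in> dir G" and "(v2, v3) \<in> dir G" and "(v2, v3) \<in> bi G"
    and "(v1, v3) \<in> dir G"
  shows "markov_equivalent G (G\<lparr>dir := dir G - {(v1, v3)}\<rparr>)"
proof -
  define H where "H = G\<lparr>dir := dir G - {(v1, v3)}\<rparr>"
  have rt: "(dir H)\<^sup>* = (dir G)\<^sup>*"
  proof (rule equalityI)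
    show "(dir H)\<^sup>* \<subseteq> (dir G)\<^sup>*" unfolding H_def by (intro rtrancl_mono) auto
    show "(dir G)\<^sup>* \<subseteq> (dir H)\<^sup>*"
    proof (rule rtrancl_subset_rtrancl, rule subsetI)
      fix p assume p: "p \<in> dir G"
      show "p \<in> (dir H)\<^sup>*"
      proof (cases "p = (v1, v3)")
        case True
        have "(v1, v2) \<in> dir H" "(v2, v3) \<in> dir H" unfolding H_def using assms by auto
        then show ?thesis using True by (meson rtrancl.rtrancl_into_rtrancl r_into_rtrancl)
      next
        case False then show ?thesis using p unfolding H_def by auto
      qed
    qed
  qed
  have desc: "descendant H = descendant G" unfolding descendant_def using rt by (intro ext) auto
  have HG: "edge_ok H u w e \<Longrightarrow> edge_ok G u w e" for u w e
    by (cases e) (auto simp: H_def)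
  have GH: "edge_ok G u w e \<Longrightarrow> \<not> bad v1 v3 u w e \<Longrightarrow> edge_ok H u w e" for u w e
    by (cases e) (auto simp: H_def bad_def)
  have vH: "verts H = verts G" unfolding H_def by simp
  have "d_connected G a b Z \<longleftrightarrow> d_connected H a b Z" for a b Z
  proof
    assume "d_connected G a b Z"
    then obtain vs es where "is_path G a b vs es" "active G Z vs es" unfolding d_connected_def by blast
    then obtain vs' es' where p: "is_path G a b vs' es'" "active G Z vs' es'" "badset v1 v3 vs' es' = {}"
      using elim_bad[OF assms(1) assms(3) assms(5) assms(6) assms(8) assms(9) assms(10)] by blast
    have "is_path H a b vs' es'" using p GH vH unfolding is_path_def badset_def by auto
    moreover have "active H Z vs' es'" using p(2) desc unfolding active_def by simp
    ultimately show "d_connected H a b Z" unfolding d_connected_def by blast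
  next
    assume "d_connected H a b Z"
    then obtain vs es where p: "is_path H a b vs es" "active H Z vs es" unfolding d_connected_def by blast
    have "is_path G a b vs es" using p HG vH unfolding is_path_def by auto
    moreover have "active G Z vs es" using p(2) desc unfolding active_def by simp
    ultimately show "d_connected G a b Z" unfolding d_connected_def by blast
  qed
  then show ?thesis unfolding markov_equivalent_def d_separated_def H_def[symmetric] using vH by auto
qed

end
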